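(* Let $G=(V,E)$ be a simple, unoriented, locally finite graph with graph distance $d$, and let $x,x'$ be adjacent vertices with degrees $d_x=\delta$ and $d_{x'}=\delta'$. Let $N$ be a positive integer and $t=1/N$. Then there exists an optimal coupling $\xi^t$ between $\mu^t_x$ and $\mu^t_{x'}$ (i.e. one attaining $W_1(\mu^t_x,\mu^t_{x'})$) all of whose coefficients lie in $\frac{1}{N\delta\delta'}\mathbb{N}$. Consequently $\kappa^1(x,x')$ and $\operatorname{ric}(x,x')$ lie in $\frac{1}{\delta\delta'}\mathbb{Z}$.
   Context: For a vertex $x$, $S_x$ is the set of neighbours of $x$ and $d_x=|S_x|$; $d$ is the graph distance. The lazy random walk $\mu^t_x$ is the probability measure with $\mu^t_x(x)=1-t$, $\mu^t_x(y)=t/d_x$ for $y\in S_x$, and $0$ elsewhere. A coupling between probability measures $\mu,\mu'$ on $V$ is a nonnegative function $\xi$ on $V\times V$ with $\sum_{y'}\xi(y,y')=\mu(y)$ and $\sum_y\xi(y,y')=\mu'(y')$. $W_1(\mu,\mu')=\inf_\xi\sum_{y,y'}\xi(y,y')d(y,y')$ over all couplings. $\kappa^t(x,x')=1-W_1(\mu^t_x,\mu^t_{x'})/d(x,x')$ (so $\kappa^1$ uses the uniform measures on the neighbourhoods), and $\operatorname{ric}(x,x')=\liminf_{t\to0^+}\kappa^t(x,x')/t$. *)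

theory Defs
  imports "HOL-Analysis.Analysis" "HOL-Library.Extended_Real"
begin

text \<open>A simple unoriented graph on the vertex type 'a is given by an adjacency
  relation E (symmetric, irreflexive).\<close>

definition nbrs :: "('a \<Rightarrow> 'a \<Rightarrow> bool) \<Rightarrow> 'a \<Rightarrow> 'a set" where
  "nbrs E x = {y. E x y}"

definition deg :: "('a \<Rightarrow> 'a \<Rightarrow> bool) \<Rightarrow> 'a \<Rightarrow> nat" where
  "deg E x = card (nbrs E x)"

text \<open>Graph distance: length of a shortest walk (only used between vertices in the
  same connected component).\<close>
definition walk_len :: "('a \<Rightarrow> 'a \<Rightarrow> bool) \<Rightarrow> 'a \<Rightarrow> 'a \<Rightarrow> nat \<Rightarrow> bool" where
  "walk_len E x y n \<longleftrightarrow> (\<exists>p::nat \<Rightarrow> 'a. p 0 = x \<and> p n = y \<and> (\<forall>i<n. E (p i) (p (Suc i))))"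

definition gdist :: "('a \<Rightarrow> 'a \<Rightarrow> bool) \<Rightarrow> 'a \<Rightarrow> 'a \<Rightarrow> real" where
  "gdist E x y = real (LEAST n. walk_len E x y n)"

definition lazy_rw :: "('a \<Rightarrow> 'a \<Rightarrow> bool) \<Rightarrow> real \<Rightarrow> 'a \<Rightarrow> 'a \<Rightarrow> real" where
  "lazy_rw E t x y = (if y = x then 1 - t else if E x y then t / real (deg E x) else 0)"

definition is_coupling :: "('a \<Rightarrow> real) \<Rightarrow> ('a \<Rightarrow> real) \<Rightarrow> ('a \<times> 'a \<Rightarrow> real) \<Rightarrow> bool" where
  "is_coupling \<mu> \<mu>' \<xi> \<longleftrightarrow> (\<forall>p. \<xi> p \<ge> 0)
     \<and> (\<forall>y. ((\<lambda>y'. \<xi> (y, y')) has_sum \<mu> y) UNIV)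
     \<and> (\<forall>y'. ((\<lambda>y. \<xi> (y, y')) has_sum \<mu>' y') UNIV)"

definition coupling_cost :: "('a \<Rightarrow> 'a \<Rightarrow> bool) \<Rightarrow> ('a \<times> 'a \<Rightarrow> real) \<Rightarrow> real" where
  "coupling_cost E \<xi> = (\<Sum>\<^sub>\<infinity>(y, y')\<in>UNIV. \<xi> (y, y') * gdist E y y')"

definition W1 :: "('a \<Rightarrow> 'a \<Rightarrow> bool) \<Rightarrow> ('a \<Rightarrow> real) \<Rightarrow> ('a \<Rightarrow> real) \<Rightarrow> real" where
  "W1 E \<mu> \<mu>' = Inf {coupling_cost E \<xi> | \<xi>. is_coupling \<mu> \<mu>' \<xi>}"

definition optimal_coupling :: "('a \<Rightarrow> 'a \<Rightarrow> bool) \<Rightarrow> ('a \<Rightarrow> real) \<Rightarrow> ('a \<Rightarrow> real) \<Rightarrow> ('a \<times> 'a \<Rightarrow> real) \<Rightarrow> bool" where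
  "optimal_coupling E \<mu> \<mu>' \<xi> \<longleftrightarrow> is_coupling \<mu> \<mu>' \<xi> \<and> coupling_cost E \<xi> = W1 E \<mu> \<mu>'"

definition kappa :: "('a \<Rightarrow> 'a \<Rightarrow> bool) \<Rightarrow> real \<Rightarrow> 'a \<Rightarrow> 'a \<Rightarrow> real" where
  "kappa E t x x' = 1 - W1 E (lazy_rw E t x) (lazy_rw E t x') / gdist E x x'"

text \<open>ric as an extended real (liminf may a priori be infinite).\<close>
definition ric :: "('a \<Rightarrow> 'a \<Rightarrow> bool) \<Rightarrow> 'a \<Rightarrow> 'a \<Rightarrow> ereal" where
  "ric E x x' = Liminf (at_right 0) (\<lambda>t. ereal (kappa E t x x' / t))"

end

theory Submission
  imports Defs
begin


lemma kernel_exists: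
  fixes a :: "'j \<Rightarrow> 'b \<Rightarrow> real"
  assumes "finite J"
  shows "finite V \<Longrightarrow> card J < card V \<Longrightarrow>
    \<exists>D. (\<forall>v. v \<notin> V \<longrightarrow> D v = 0) \<and> (\<exists>v\<in>V. D v \<noteq> 0) \<and> (\<forall>j\<in>J. (\<Sum>v\<in>V. a j v * D v) = 0)"
  using assms
proof (induction J arbitrary: V a rule: finite_induct)
  case empty
  then obtain v where v: "v \<in> V" by (metis card.empty card_gt_0_iff all_not_in_conv)
  show ?case by (rule exI[of _ "\<lambda>w. if w = v then 1 else 0"]) (use v in simp)
next
  case (insert j J0)
  show ?case
  proof (cases "\<forall>v\<in>V. a j v = 0")
    case True
    have cJ0: "card J0 < card V" using insert.prems(2) insert.hyps by simp
    from insert.IH[OF insert.prems(1) cJ0]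
    obtain D where D: "\<forall>v. v \<notin> V \<longrightarrow> D v = 0" "\<exists>v\<in>V. D v \<noteq> 0" "\<forall>i\<in>J0. (\<Sum>v\<in>V. a i v * D v) = 0"
      by blast
    show ?thesis using D True by (intro exI[of _ D]) auto
  next
    case False
    then obtain v0 where v0: "v0 \<in> V" "a j v0 \<noteq> 0" by auto
    define V' where "V' = V - {v0}"
    define a' where "a' i v = a i v - a i v0 * a j v / a j v0" for i v
    have fV': "finite V'" using insert.prems V'_def by auto
    have cV': "card J0 < card V'" using insert.prems insert.hyps v0 unfolding V'_def
      by (simp add: card_Diff_singleton)
    from insert.IH[OF fV' cV', of a']
    obtain D' where D': "\<forall>v. v \<notin> V' \<longrightarrow> D' v = 0" "\<exists>v\<in>V'. D' v \<noteq> 0"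
       "\<forall>i\<in>J0. (\<Sum>v\<in>V'. a' i v * D' v) = 0" by blast
    define X where "X = (\<Sum>v\<in>V'. a j v * D' v)"
    define D where "D = D'(v0 := - X / a j v0)"
    have sumV: "(\<Sum>v\<in>V. a i v * D v) = a i v0 * (- X / a j v0) + (\<Sum>v\<in>V'. a i v * D' v)" for i
    proof -
      have "(\<Sum>v\<in>V. a i v * D v) = a i v0 * D v0 + (\<Sum>v\<in>V'. a i v * D v)"
        unfolding V'_def by (rule sum.remove[OF insert.prems(1) v0(1)])
      also have "(\<Sum>v\<in>V'. a i v * D v) = (\<Sum>v\<in>V'. a i v * D' v)"
        by (rule sum.cong) (auto simp: D_def V'_def)
      finally show ?thesis by (simp add: D_def)
    qed
    show ?thesis
    proof (intro exI[of _ D] conjI ballI allI impI)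
      fix v assume "v \<notin> V" then show "D v = 0" using D' v0 by (auto simp: D_def V'_def)
    next
      show "\<exists>v\<in>V. D v \<noteq> 0" using D'(2) by (auto simp: D_def V'_def)
    next
      fix i assume "i \<in> insert j J0"
      then consider "i = j" | "i \<in> J0" by auto
      then show "(\<Sum>v\<in>V. a i v * D v) = 0"
      proof cases
        case 1 then show ?thesis using v0 by (simp add: sumV X_def)
      next
        case 2
        have "(\<Sum>v\<in>V'. a' i v * D' v) = (\<Sum>v\<in>V'. a i v * D' v) - a i v0 / a j v0 * X"
        proof -
          have "(\<Sum>v\<in>V'. a' i v * D' v) = (\<Sum>v\<in>V'. a i v * D' v - (a i v0 / a j v0) * (a j v * D' v))"
            by (rule sum.cong[OF refl]) (simp add: a'_def algebra_simps)
          also have "\<dots> = (\<Sum>v\<in>V'. a i v * D' v) - (a i v0 / a j v0) * X"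
            unfolding X_def by (simp only: sum_subtractf sum_distrib_left)
          finally show ?thesis .
        qed
        then show ?thesis using D'(3) 2 by (simp add: sumV)
      qed
    qed
  qed
qed



lemma row_as_sum:
  assumes "finite S" "r \<in> S"
  shows "(\<Sum>c\<in>S. D (r,c)) = (\<Sum>e\<in>S\<times>S. if fst e = r then D e else (0::real))"
proof -
  have "(\<Sum>e\<in>S\<times>S. if fst e = r then D e else (0::real)) = (\<Sum>r'\<in>S. \<Sum>c\<in>S. if r' = r then D (r',c) else 0)"
    by (subst sum.cartesian_product) (rule sum.cong, auto)
  also have "\<dots> = (\<Sum>r'\<in>S. if r' = r then (\<Sum>c\<in>S. D (r',c)) else 0)"
    by (rule sum.cong) auto
  also have "\<dots> = (\<Sum>c\<in>S. D (r,c))" using assms by simp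
  finally show ?thesis by simp
qed

lemma col_as_sum:
  assumes "finite S" "c \<in> S"
  shows "(\<Sum>r\<in>S. D (r,c)) = (\<Sum>e\<in>S\<times>S. if snd e = c then D e else (0::real))"
proof -
  have "(\<Sum>e\<in>S\<times>S. if snd e = c then D e else (0::real)) = (\<Sum>r\<in>S. \<Sum>c'\<in>S. if c' = c then D (r,c') else 0)"
    by (subst sum.cartesian_product) (rule sum.cong, auto)
  also have "\<dots> = (\<Sum>r\<in>S. D (r,c))" using assms by simp
  finally show ?thesis by simp
qed

lemma fiber_card_ge2:
  fixes A :: "'a \<times> 'a \<Rightarrow> real"
  assumes fin: "finite S" and F: "F = {e\<in>S\<times>S. A e \<notin> \<int>}"
    and rowI: "\<forall>r\<in>S. (\<Sum>c\<in>S. A(r,c)) \<in> \<int>"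
    and r: "r \<in> fst ` F"
  shows "2 \<le> card {e\<in>F. fst e = r}"
proof (rule ccontr)
  assume "\<not> 2 \<le> card {e\<in>F. fst e = r}"
  moreover have finF: "finite F" using fin F by simp
  moreover have "{e\<in>F. fst e = r} \<noteq> {}" using r by auto
  ultimately have "card {e\<in>F. fst e = r} = 1"
  proof -
    have "card {e\<in>F. fst e = r} \<noteq> 0" using \<open>finite F\<close> \<open>{e\<in>F. fst e = r} \<noteq> {}\<close> by simp
    then show ?thesis using \<open>\<not> 2 \<le> card {e\<in>F. fst e = r}\<close> by linarith
  qed
  then obtain e0 where e0: "{e\<in>F. fst e = r} = {e0}" using card_1_singletonE by blast
  have "fst e0 = r" using e0 by auto
  then obtain c0 where ec: "e0 = (r, c0)" by (cases e0) auto
  have e0F: "e0 \<in> F" using e0 by auto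
  hence rS: "r \<in> S" and c0S: "c0 \<in> S" using F ec by auto
  have rest: "(\<Sum>c\<in>S-{c0}. A (r,c)) \<in> \<int>"
  proof (rule Ints_sum)
    fix c assume c: "c \<in> S - {c0}"
    have "(r,c) \<notin> F"
    proof
      assume "(r,c) \<in> F" then have "(r,c) \<in> {e\<in>F. fst e = r}" by simp
      then show False using e0 ec c by auto
    qed
    then show "A (r,c) \<in> \<int>" using F c rS by auto
  qed
  have "(\<Sum>c\<in>S. A(r,c)) = A (r,c0) + (\<Sum>c\<in>S-{c0}. A (r,c))"
    using sum.remove[OF fin c0S] .
  hence "A (r,c0) = (\<Sum>c\<in>S. A(r,c)) - (\<Sum>c\<in>S-{c0}. A (r,c))" by simp
  also have "\<dots> \<in> \<int>" using rowI rS rest by (intro Ints_diff) auto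
  finally show False using e0F F ec by auto
qed

lemma card_fibers:
  assumes "finite F" "\<And>r. r \<in> f ` F \<Longrightarrow> 2 \<le> card {e\<in>F. f e = r}"
  shows "2 * card (f ` F) \<le> card F"
proof -
  have "card F = (\<Sum>r\<in>f ` F. card {e\<in>F. f e = r})"
    using sum.group[OF assms(1) finite_imageI[OF assms(1)] subset_refl, where g=f and h="\<lambda>_. 1::nat"]
    by simp
  also have "\<dots> \<ge> (\<Sum>r\<in>f ` F. 2)" by (rule sum_mono) (use assms(2) in auto)
  finally show ?thesis by simp
qed



lemma circ_exists:
  fixes A :: "'a \<times> 'a \<Rightarrow> real"
  assumes fin: "finite S"
    and rowI: "\<forall>r\<in>S. (\<Sum>c\<in>S. A(r,c)) \<in> \<int>" and colI: "\<forall>c\<in>S. (\<Sum>r\<in>S. A(r,c)) \<in> \<int>"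
    and F: "F = {e\<in>S\<times>S. A e \<notin> \<int>}" and ne: "F \<noteq> {}"
  shows "\<exists>D::'a\<times>'a\<Rightarrow>real. (\<forall>e. e \<notin> F \<longrightarrow> D e = 0) \<and> (\<exists>e\<in>F. D e \<noteq> 0) \<and>
             (\<forall>r\<in>S. (\<Sum>c\<in>S. D(r,c)) = 0) \<and> (\<forall>c\<in>S. (\<Sum>r\<in>S. D(r,c)) = 0)"
proof -
  have finF: "finite F" using fin F by simp
  have FS: "F \<subseteq> S \<times> S" using F by auto
  define R where "R = fst ` F"
  define C where "C = snd ` F"
  have R2: "2 * card R \<le> card F"
    unfolding R_def by (rule card_fibers[OF finF]) (rule fiber_card_ge2[OF fin F rowI])
  define A' where "A' e = A (snd e, fst e)" for e :: "'a \<times> 'a"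
  define F' where "F' = {e\<in>S\<times>S. A' e \<notin> \<int>}"
  have rowI': "\<forall>r\<in>S. (\<Sum>c\<in>S. A'(r,c)) \<in> \<int>" using colI by (simp add: A'_def)
  have F'eq: "F' = (\<lambda>(a,b). (b,a)) ` F" unfolding F'_def F A'_def by auto
  have finF': "finite F'" using fin F'_def by simp
  have "2 * card (fst ` F') \<le> card F'"
    by (rule card_fibers[OF finF']) (rule fiber_card_ge2[OF fin F'_def rowI'])
  moreover have "fst ` F' = C" unfolding F'eq C_def by (simp add: image_image case_prod_beta)
  moreover have "card F' = card F" unfolding F'eq
    by (rule card_image) (auto simp: inj_on_def)
  ultimately have C2: "2 * card C \<le> card F" by simp
  obtain c0 where c0: "c0 \<in> C" using ne C_def by auto
  define J where "J = Inl ` R \<union> Inr ` (C - {c0})"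
  define a where "a (j::'a+'a) (e::'a\<times>'a) = (case j of Inl r \<Rightarrow> (if fst e = r then 1 else 0) | Inr c \<Rightarrow> (if snd e = c then 1 else (0::real)))" for j e
  have finC: "finite C" "finite R" using finF C_def R_def by auto
  have "card J \<le> card (Inl ` R :: ('a+'a) set) + card (Inr ` (C - {c0}) :: ('a+'a) set)" unfolding J_def
    by (rule card_Un_le)
  also have "card (Inl ` R :: ('a+'a) set) = card R" by (simp add: card_image)
  also have "card (Inr ` (C - {c0}) :: ('a+'a) set) = card (C - {c0})" by (simp add: card_image)
  also have "card (C - {c0}) = card C - 1" using c0 finC by simp
  finally have cJ: "card J \<le> card R + (card C - 1)" .
  have "card C \<noteq> 0" using c0 finC by auto
  moreover have "card R + card C \<le> card F" using R2 C2 by linarith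
  ultimately have "card R + (card C - 1) < card F" by presburger
  then have "card J < card F" using cJ by linarith
  moreover have "finite J" unfolding J_def using finC by simp
  ultimately obtain D where D: "\<forall>v. v \<notin> F \<longrightarrow> D v = 0" "\<exists>v\<in>F. D v \<noteq> 0"
    "\<forall>j\<in>J. (\<Sum>v\<in>F. a j v * D v) = 0"
    using kernel_exists[of J F a] finF by blast
  have row0: "(\<Sum>c\<in>S. D(r,c)) = 0" if r: "r \<in> S" for r
  proof -
    have "(\<Sum>c\<in>S. D(r,c)) = (\<Sum>e\<in>S\<times>S. if fst e = r then D e else 0)" by (rule row_as_sum[OF fin r])
    also have "\<dots> = (\<Sum>e\<in>F. if fst e = r then D e else 0)"
      by (rule sum.mono_neutral_right) (use fin FS D(1) in auto)
    also have "\<dots> = 0"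
    proof (cases "r \<in> R")
      case True
      then have "Inl r \<in> J" by (simp add: J_def)
      then have "(\<Sum>v\<in>F. a (Inl r) v * D v) = 0" using D(3) by blast
      moreover have "(\<Sum>v\<in>F. a (Inl r) v * D v) = (\<Sum>e\<in>F. if fst e = r then D e else 0)"
        by (rule sum.cong) (auto simp: a_def)
      ultimately show ?thesis by simp
    next
      case False
      then show ?thesis by (intro sum.neutral) (auto simp: R_def)
    qed
    finally show ?thesis .
  qed
  have col0': "(\<Sum>r\<in>S. D(r,c)) = 0" if c: "c \<in> S" "c \<noteq> c0" for c
  proof -
    have "(\<Sum>r\<in>S. D(r,c)) = (\<Sum>e\<in>S\<times>S. if snd e = c then D e else 0)" by (rule col_as_sum[OF fin c(1)])
    also have "\<dots> = (\<Sum>e\<in>F. if snd e = c then D e else 0)"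
      by (rule sum.mono_neutral_right) (use fin FS D(1) in auto)
    also have "\<dots> = 0"
    proof (cases "c \<in> C")
      case True
      then have "Inr c \<in> J" using c by (simp add: J_def)
      then have "(\<Sum>v\<in>F. a (Inr c) v * D v) = 0" using D(3) by blast
      moreover have "(\<Sum>v\<in>F. a (Inr c) v * D v) = (\<Sum>e\<in>F. if snd e = c then D e else 0)"
        by (rule sum.cong) (auto simp: a_def)
      ultimately show ?thesis by simp
    next
      case False
      then show ?thesis by (intro sum.neutral) (auto simp: C_def)
    qed
    finally show ?thesis .
  qed
  have c0S: "c0 \<in> S" using c0 FS C_def by auto
  have tot: "(\<Sum>c\<in>S. \<Sum>r\<in>S. D(r,c)) = (\<Sum>r\<in>S. \<Sum>c\<in>S. D(r,c))" by (rule sum.swap)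
  also have "\<dots> = 0" using row0 by simp
  finally have "(\<Sum>r\<in>S. D(r,c0)) + (\<Sum>c\<in>S-{c0}. \<Sum>r\<in>S. D(r,c)) = 0"
    using sum.remove[OF fin c0S, of "\<lambda>c. \<Sum>r\<in>S. D(r,c)"] by simp
  moreover have "(\<Sum>c\<in>S-{c0}. \<Sum>r\<in>S. D(r,c)) = 0" using col0' by simp
  ultimately have "(\<Sum>r\<in>S. D(r,c0)) = 0" by simp
  then have col0: "(\<Sum>r\<in>S. D(r,c)) = 0" if "c \<in> S" for c
  proof (cases "c = c0")
    case True then show ?thesis using \<open>(\<Sum>r\<in>S. D(r,c0)) = 0\<close> by simp
  next
    case False then show ?thesis using col0' that by blast
  qed
  show ?thesis
  proof (intro exI conjI)
    show "\<forall>e. e \<notin> F \<longrightarrow> D e = 0" by (rule D(1))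
    show "\<exists>e\<in>F. D e \<noteq> 0" by (rule D(2))
    show "\<forall>r\<in>S. (\<Sum>c\<in>S. D(r,c)) = 0" using row0 by blast
    show "\<forall>c\<in>S. (\<Sum>r\<in>S. D(r,c)) = 0" using col0 by blast
  qed
qed



lemma frac_bounds:
  fixes a :: real assumes "a \<notin> \<int>"
  shows "of_int (floor a) < a" "a < of_int (ceiling a)"
proof -
  have "of_int (floor a) \<noteq> a" using assms by (metis Ints_of_int)
  then show "of_int (floor a) < a" using of_int_floor_le[of a] by linarith
  have "of_int (ceiling a) \<noteq> a" using assms by (metis Ints_of_int)
  then show "a < of_int (ceiling a)" using le_of_int_ceiling[of a] by linarith
qed

lemma perturb:
  fixes A D :: "'a \<times> 'a \<Rightarrow> real"
  assumes fin: "finite S" and nonneg: "\<forall>e. A e \<ge> 0" and zero: "\<forall>e. e \<notin> S\<times>S \<longrightarrow> A e = 0"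
    and F: "F = {e\<in>S\<times>S. A e \<notin> \<int>}"
    and Dsupp: "\<forall>e. e \<notin> F \<longrightarrow> D e = 0" and Dnz: "\<exists>e\<in>F. D e \<noteq> 0"
    and Drow: "\<forall>r\<in>S. (\<Sum>c\<in>S. D(r,c)) = 0" and Dcol: "\<forall>c\<in>S. (\<Sum>r\<in>S. D(r,c)) = 0"
    and Dcost: "(\<Sum>e\<in>S\<times>S. D e * w e) \<le> 0"
  shows "\<exists>A'. (\<forall>e. A' e \<ge> 0) \<and> (\<forall>e. e \<notin> S\<times>S \<longrightarrow> A' e = 0)
     \<and> (\<forall>r\<in>S. (\<Sum>c\<in>S. A'(r,c)) = (\<Sum>c\<in>S. A(r,c)))
     \<and> (\<forall>c\<in>S. (\<Sum>r\<in>S. A'(r,c)) = (\<Sum>r\<in>S. A(r,c)))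
     \<and> (\<Sum>e\<in>S\<times>S. A' e * w e) \<le> (\<Sum>e\<in>S\<times>S. A e * w e)
     \<and> {e\<in>S\<times>S. A' e \<notin> \<int>} \<subset> F"
proof -
  define P where "P = {e\<in>F. D e \<noteq> 0}"
  have finP: "finite P" using fin F P_def by simp
  have Pne: "P \<noteq> {}" using Dnz P_def by auto
  define g where "g e = (if D e > 0 then (of_int (ceiling (A e)) - A e) / D e
                          else (A e - of_int (floor (A e))) / (- D e))" for e
  have gpos: "g e > 0" if "e \<in> P" for e
  proof -
    have "A e \<notin> \<int>" "D e \<noteq> 0" using that P_def F by auto
    then show ?thesis using frac_bounds[of "A e"] by (auto simp: g_def field_simps)
  qed
  define s where "s = Min (g ` P)"
  have sle: "s \<le> g e" if "e \<in> P" for e using finP that s_def by simp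
  have "s \<in> g ` P" unfolding s_def using finP Pne by (intro Min_in) auto
  then obtain e0 where e0: "e0 \<in> P" "g e0 = s" by auto
  have spos: "s > 0" using gpos[OF e0(1)] e0(2) by simp
  define A' where "A' e = A e + s * D e" for e
  have A'nonneg: "A' e \<ge> 0" for e
  proof (cases "D e < 0")
    case True
    have "e \<in> F"
    proof (rule ccontr)
      assume "e \<notin> F" then have "D e = 0" using Dsupp by blast
      then show False using True by simp
    qed
    then have eP: "e \<in> P" using True by (simp add: P_def)
    have "s \<le> (A e - of_int (floor (A e))) / (- D e)" using sle[OF eP] True by (simp add: g_def)
    moreover have c: "- D e > 0" using True by simp
    ultimately have "s * (- D e) \<le> A e - of_int (floor (A e))" using pos_le_divide_eq[OF c] by blast
    moreover have "(0::real) \<le> of_int (floor (A e))" using nonneg[rule_format, of e] by simp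
    ultimately show ?thesis unfolding A'_def by linarith
  next
    case False
    then have "0 \<le> s * D e" using spos by simp
    then show ?thesis using nonneg[rule_format, of e] unfolding A'_def by linarith
  qed
  have A'zero: "A' e = 0" if "e \<notin> S\<times>S" for e
  proof -
    have "A e = 0" using zero that by blast
    moreover have "e \<notin> F" using that F by auto
    then have "D e = 0" using Dsupp by blast
    ultimately show ?thesis by (simp add: A'_def)
  qed
  have A'e0: "A' e0 \<in> \<int>"
  proof (cases "D e0 > 0")
    case True
    have "s = (of_int (ceiling (A e0)) - A e0) / D e0" using e0(2) True by (simp add: g_def)
    then have "s * D e0 = of_int (ceiling (A e0)) - A e0" using True by simp
    then have "A' e0 = of_int (ceiling (A e0))" by (simp add: A'_def)
    then show ?thesis by simp
  next
    case False
    then have "D e0 < 0" using e0 P_def by auto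
    have "s = (A e0 - of_int (floor (A e0))) / (- D e0)" using e0(2) False by (simp add: g_def)
    then have "s * (- D e0) = A e0 - of_int (floor (A e0))" using \<open>D e0 < 0\<close> by simp
    then have "A' e0 = of_int (floor (A e0))" by (simp add: A'_def algebra_simps)
    then show ?thesis by simp
  qed
  have sub: "{e\<in>S\<times>S. A' e \<notin> \<int>} \<subseteq> F - {e0}"
  proof
    fix e assume e: "e \<in> {e\<in>S\<times>S. A' e \<notin> \<int>}"
    show "e \<in> F - {e0}"
    proof (cases "e \<in> F")
      case True then show ?thesis using e A'e0 by auto
    next
      case False
      then have "D e = 0" using Dsupp by blast
      then have "A' e = A e" by (simp add: A'_def)
      then show ?thesis using e F False by auto
    qed
  qed
  have e0F: "e0 \<in> F" using e0 P_def by auto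
  have strict: "{e\<in>S\<times>S. A' e \<notin> \<int>} \<subset> F" using sub e0F by blast
  have rows: "(\<Sum>c\<in>S. A'(r,c)) = (\<Sum>c\<in>S. A(r,c))" if "r \<in> S" for r
    using Drow that by (simp add: A'_def sum.distrib sum_distrib_left[symmetric])
  have cols: "(\<Sum>r\<in>S. A'(r,c)) = (\<Sum>r\<in>S. A(r,c))" if "c \<in> S" for c
    using Dcol that by (simp add: A'_def sum.distrib sum_distrib_left[symmetric])
  have "(\<Sum>e\<in>S\<times>S. A' e * w e) = (\<Sum>e\<in>S\<times>S. A e * w e) + s * (\<Sum>e\<in>S\<times>S. D e * w e)"
    by (simp add: A'_def algebra_simps sum.distrib sum_distrib_left)
  also have "\<dots> \<le> (\<Sum>e\<in>S\<times>S. A e * w e)" using spos Dcost by (simp add: mult_nonneg_nonpos)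
  finally have cost: "(\<Sum>e\<in>S\<times>S. A' e * w e) \<le> (\<Sum>e\<in>S\<times>S. A e * w e)" .
  show ?thesis
    by (rule exI[of _ A']) (use A'nonneg A'zero rows cols cost strict in blast)
qed



lemma rounding:
  fixes A :: "'a \<times> 'a \<Rightarrow> real" and w :: "'a \<times> 'a \<Rightarrow> real"
  assumes fin: "finite S" and nonneg: "\<forall>e. A e \<ge> 0" and zero: "\<forall>e. e \<notin> S\<times>S \<longrightarrow> A e = 0"
    and rowI: "\<forall>r\<in>S. (\<Sum>c\<in>S. A(r,c)) \<in> \<int>" and colI: "\<forall>c\<in>S. (\<Sum>r\<in>S. A(r,c)) \<in> \<int>"
  shows "\<exists>B. (\<forall>e. B e \<ge> 0) \<and> (\<forall>e. B e \<in> \<int>) \<and> (\<forall>e. e \<notin> S\<times>S \<longrightarrow> B e = 0)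
     \<and> (\<forall>r\<in>S. (\<Sum>c\<in>S. B(r,c)) = (\<Sum>c\<in>S. A(r,c)))
     \<and> (\<forall>c\<in>S. (\<Sum>r\<in>S. B(r,c)) = (\<Sum>r\<in>S. A(r,c)))
     \<and> (\<Sum>e\<in>S\<times>S. B e * w e) \<le> (\<Sum>e\<in>S\<times>S. A e * w e)"
  using nonneg zero rowI colI
proof (induction "card {e\<in>S\<times>S. A e \<notin> \<int>}" arbitrary: A rule: less_induct)
  case less
  define F where "F = {e\<in>S\<times>S. A e \<notin> \<int>}"
  show ?case
  proof (cases "F = {}")
    case True
    have "A e \<in> \<int>" for e
    proof (cases "e \<in> S\<times>S")
      case True then show ?thesis using \<open>F = {}\<close> F_def by auto
    next
      case False then show ?thesis using less.prems(2)[rule_format, OF False] by simp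
    qed
    then show ?thesis using less.prems by (intro exI[of _ A]) auto
  next
    case False
    obtain D :: "'a\<times>'a \<Rightarrow> real" where D: "\<forall>e. e \<notin> F \<longrightarrow> D e = 0" "\<exists>e\<in>F. D e \<noteq> 0"
      "\<forall>r\<in>S. (\<Sum>c\<in>S. D(r,c)) = 0" "\<forall>c\<in>S. (\<Sum>r\<in>S. D(r,c)) = 0"
      using circ_exists[OF fin less.prems(3,4) F_def False] by blast
    define D' where "D' = (if (\<Sum>e\<in>S\<times>S. D e * w e) \<le> 0 then D else (\<lambda>e. - D e))"
    have D': "\<forall>e. e \<notin> F \<longrightarrow> D' e = 0" "\<exists>e\<in>F. D' e \<noteq> 0"
      "\<forall>r\<in>S. (\<Sum>c\<in>S. D'(r,c)) = 0" "\<forall>c\<in>S. (\<Sum>r\<in>S. D'(r,c)) = 0"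
      "(\<Sum>e\<in>S\<times>S. D' e * w e) \<le> 0"
      using D by (auto simp: D'_def sum_negf)
    obtain A' where A': "\<forall>e. A' e \<ge> 0" "\<forall>e. e \<notin> S\<times>S \<longrightarrow> A' e = 0"
      "\<forall>r\<in>S. (\<Sum>c\<in>S. A'(r,c)) = (\<Sum>c\<in>S. A(r,c))"
      "\<forall>c\<in>S. (\<Sum>r\<in>S. A'(r,c)) = (\<Sum>r\<in>S. A(r,c))"
      "(\<Sum>e\<in>S\<times>S. A' e * w e) \<le> (\<Sum>e\<in>S\<times>S. A e * w e)"
      "{e\<in>S\<times>S. A' e \<notin> \<int>} \<subset> F"
      using perturb[OF fin less.prems(1,2) F_def D'] by blast
    have finF: "finite F" using fin F_def by simp
    have lt: "card {e\<in>S\<times>S. A' e \<notin> \<int>} < card {e\<in>S\<times>S. A e \<notin> \<int>}"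
      using psubset_card_mono[OF finF A'(6)] F_def by simp
    have r': "\<forall>r\<in>S. (\<Sum>c\<in>S. A'(r,c)) \<in> \<int>" using A'(3) less.prems(3) by simp
    have c': "\<forall>c\<in>S. (\<Sum>r\<in>S. A'(r,c)) \<in> \<int>" using A'(4) less.prems(4) by simp
    obtain B where B: "\<forall>e. B e \<ge> 0" "\<forall>e. B e \<in> \<int>" "\<forall>e. e \<notin> S\<times>S \<longrightarrow> B e = 0"
     "\<forall>r\<in>S. (\<Sum>c\<in>S. B(r,c)) = (\<Sum>c\<in>S. A'(r,c))"
     "\<forall>c\<in>S. (\<Sum>r\<in>S. B(r,c)) = (\<Sum>r\<in>S. A'(r,c))"
     "(\<Sum>e\<in>S\<times>S. B e * w e) \<le> (\<Sum>e\<in>S\<times>S. A' e * w e)"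
      using less.hyps[OF lt A'(1,2) r' c'] by blast
    show ?thesis
      by (rule exI[of _ B]) (use B A' in auto)
  qed
qed



lemma has_sum_supp:
  fixes f :: "'b \<Rightarrow> real"
  assumes "finite T" "\<And>y. y \<notin> T \<Longrightarrow> f y = 0"
  shows "(f has_sum s) UNIV \<longleftrightarrow> s = (\<Sum>y\<in>T. f y)"
proof -
  have "(f has_sum s) UNIV \<longleftrightarrow> (f has_sum s) T"
    by (rule has_sum_cong_neutral) (use assms in auto)
  also have "\<dots> \<longleftrightarrow> s = (\<Sum>y\<in>T. f y)" by (rule has_sum_finite_iff[OF assms(1)])
  finally show ?thesis .
qed

lemma infsum_supp:
  fixes f :: "'b \<Rightarrow> real"
  assumes "finite T" "\<And>y. y \<notin> T \<Longrightarrow> f y = 0"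
  shows "infsum f UNIV = (\<Sum>y\<in>T. f y)"
proof -
  have "infsum f UNIV = infsum f T"
    by (rule infsum_cong_neutral) (use assms in auto)
  also have "\<dots> = (\<Sum>y\<in>T. f y)" using assms(1) by simp
  finally show ?thesis .
qed

lemma has_sum_zero_nonneg:
  fixes f :: "'b \<Rightarrow> real"
  assumes "(f has_sum 0) UNIV" "\<And>y. f y \<ge> 0"
  shows "f y = 0"
proof -
  have "(f has_sum f y) {y}" by (subst has_sum_finite_iff) auto
  then have "f y \<le> 0" by (rule has_sum_mono_neutral[OF _ assms(1)]) (use assms(2) in auto)
  then show ?thesis using assms(2)[of y] by simp
qed

definition fcoup :: "'a set \<Rightarrow> ('a \<Rightarrow> real) \<Rightarrow> ('a \<Rightarrow> real) \<Rightarrow> ('a \<times> 'a \<Rightarrow> real) \<Rightarrow> bool" where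
  "fcoup S \<mu> \<mu>' \<xi> \<longleftrightarrow> (\<forall>p. \<xi> p \<ge> 0) \<and> (\<forall>p. p \<notin> S\<times>S \<longrightarrow> \<xi> p = 0)
     \<and> (\<forall>y\<in>S. (\<Sum>y'\<in>S. \<xi>(y,y')) = \<mu> y) \<and> (\<forall>y'\<in>S. (\<Sum>y\<in>S. \<xi>(y,y')) = \<mu>' y')"

lemma coup_iff:
  assumes fin: "finite S" and m1: "\<And>y. y \<notin> S \<Longrightarrow> \<mu> y = 0" and m2: "\<And>y. y \<notin> S \<Longrightarrow> \<mu>' y = 0"
  shows "is_coupling \<mu> \<mu>' \<xi> \<longleftrightarrow> fcoup S \<mu> \<mu>' \<xi>"
proof
  assume c: "is_coupling \<mu> \<mu>' \<xi>"
  have nn: "\<forall>p. \<xi> p \<ge> 0" using c by (simp add: is_coupling_def)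
  have rs: "((\<lambda>y'. \<xi> (y, y')) has_sum \<mu> y) UNIV" for y using c by (simp add: is_coupling_def)
  have cs: "((\<lambda>y. \<xi> (y, y')) has_sum \<mu>' y') UNIV" for y' using c by (simp add: is_coupling_def)
  have z: "\<xi> p = 0" if "p \<notin> S\<times>S" for p
  proof -
    obtain y y' where p: "p = (y,y')" by (cases p)
    show ?thesis
    proof (cases "y \<in> S")
      case False
      then have "((\<lambda>y'. \<xi> (y, y')) has_sum 0) UNIV" using rs[of y] m1[OF False] by simp
      from has_sum_zero_nonneg[OF this] nn show ?thesis using p by auto
    next
      case True
      then have "y' \<notin> S" using that p by auto
      then have "((\<lambda>y. \<xi> (y, y')) has_sum 0) UNIV" using cs[of y'] m2 by simp
      from has_sum_zero_nonneg[OF this] nn show ?thesis using p by auto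
    qed
  qed
  have r: "(\<Sum>y'\<in>S. \<xi>(y,y')) = \<mu> y" if "y \<in> S" for y
    using rs[of y] has_sum_supp[OF fin, of "\<lambda>y'. \<xi> (y, y')" "\<mu> y"] z that by auto
  have cc: "(\<Sum>y\<in>S. \<xi>(y,y')) = \<mu>' y'" if "y' \<in> S" for y'
    using cs[of y'] has_sum_supp[OF fin, of "\<lambda>y. \<xi> (y, y')" "\<mu>' y'"] z that by auto
  show "fcoup S \<mu> \<mu>' \<xi>" unfolding fcoup_def using nn z r cc by blast
next
  assume f: "fcoup S \<mu> \<mu>' \<xi>"
  have nn: "\<forall>p. \<xi> p \<ge> 0" and z: "\<And>p. p \<notin> S\<times>S \<Longrightarrow> \<xi> p = 0"
    and r: "\<And>y. y\<in>S \<Longrightarrow> (\<Sum>y'\<in>S. \<xi>(y,y')) = \<mu> y" and cc: "\<And>y'. y'\<in>S \<Longrightarrow> (\<Sum>y\<in>S. \<xi>(y,y')) = \<mu>' y'"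
    using f unfolding fcoup_def by blast+
  have rs: "((\<lambda>y'. \<xi> (y, y')) has_sum \<mu> y) UNIV" for y
  proof (cases "y \<in> S")
    case True then show ?thesis using has_sum_supp[OF fin, of "\<lambda>y'. \<xi> (y, y')" "\<mu> y"] z r by auto
  next
    case False then show ?thesis using has_sum_supp[OF fin, of "\<lambda>y'. \<xi> (y, y')" "\<mu> y"] z m1 by auto
  qed
  have cs: "((\<lambda>y. \<xi> (y, y')) has_sum \<mu>' y') UNIV" for y'
  proof (cases "y' \<in> S")
    case True then show ?thesis using has_sum_supp[OF fin, of "\<lambda>y. \<xi> (y, y')" "\<mu>' y'"] z cc by auto
  next
    case False then show ?thesis using has_sum_supp[OF fin, of "\<lambda>y. \<xi> (y, y')" "\<mu>' y'"] z m2 by auto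
  qed
  show "is_coupling \<mu> \<mu>' \<xi>" unfolding is_coupling_def using nn rs cs by blast
qed

lemma cost_eq:
  assumes "finite S" "fcoup S \<mu> \<mu>' \<xi>"
  shows "coupling_cost E \<xi> = (\<Sum>p\<in>S\<times>S. \<xi> p * gdist E (fst p) (snd p))"
proof -
  have "coupling_cost E \<xi> = infsum (\<lambda>p. \<xi> p * gdist E (fst p) (snd p)) UNIV"
    unfolding coupling_cost_def by (rule infsum_cong) (simp add: case_prod_beta)
  also have "\<dots> = (\<Sum>p\<in>S\<times>S. \<xi> p * gdist E (fst p) (snd p))"
    by (rule infsum_supp) (use assms in \<open>auto simp: fcoup_def\<close>)
  finally show ?thesis .
qed



lemma Ints_nonneg_nat:
  fixes a :: real assumes "a \<in> \<int>" "a \<ge> 0" shows "\<exists>k::nat. a = real k"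
proof -
  obtain i where i: "a = of_int i" using assms(1) by (auto elim: Ints_cases)
  then have "i \<ge> 0" using assms(2) by simp
  then show ?thesis using i by (metis of_int_of_nat_eq zero_le_imp_eq_int)
qed

lemma lazy_sum:
  assumes "finite T" "z \<in> T" "nbrs E z \<subseteq> T" "finite (nbrs E z)" "deg E z > 0" "\<not> E z z"
  shows "(\<Sum>y\<in>T. lazy_rw E t z y) = 1"
proof -
  have "(\<Sum>y\<in>T. lazy_rw E t z y) = (\<Sum>y\<in>insert z (nbrs E z). lazy_rw E t z y)"
    by (rule sum.mono_neutral_right) (use assms in \<open>auto simp: lazy_rw_def nbrs_def\<close>)
  also have "\<dots> = lazy_rw E t z z + (\<Sum>y\<in>nbrs E z. lazy_rw E t z y)"
    using assms by (subst sum.insert) (auto simp: nbrs_def)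
  also have "(\<Sum>y\<in>nbrs E z. lazy_rw E t z y) = (\<Sum>y\<in>nbrs E z. t / real (deg E z))"
    by (rule sum.cong) (use assms in \<open>auto simp: lazy_rw_def nbrs_def\<close>)
  also have "\<dots> = t" using assms(5) by (simp add: deg_def)
  finally show ?thesis by (simp add: lazy_rw_def)
qed

lemma lazy_nonneg: "0 \<le> t \<Longrightarrow> t \<le> 1 \<Longrightarrow> lazy_rw E t z y \<ge> 0"
  by (simp add: lazy_rw_def)

lemma lazy_affine:
  assumes "t > 0"
  shows "lazy_rw E s z y = (s/t) * lazy_rw E t z y + (1 - s/t) * (if y = z then 1 else 0)"
  using assms by (simp add: lazy_rw_def field_simps)

lemma lazy_int:
  assumes "N > 0" "deg E z > 0"
  shows "\<exists>k::nat. real N * real (deg E z) * real D * lazy_rw E (1 / real N) z y = real k"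
proof (cases "y = z")
  case True
  have "real N * real (deg E z) * real D * (1 - 1 / real N) = real ((N - 1) * deg E z * D)"
    using assms by (simp add: field_simps of_nat_diff)
  then show ?thesis using True by (intro exI[of _ "(N - 1) * deg E z * D"]) (simp add: lazy_rw_def)
next
  case False
  show ?thesis
  proof (cases "E z y")
    case True
    have "real N * real (deg E z) * real D * (1 / real N / real (deg E z)) = real D"
      using assms by (simp add: field_simps)
    then show ?thesis using True False by (intro exI[of _ D]) (simp add: lazy_rw_def)
  next
    case False
    then show ?thesis using \<open>y \<noteq> z\<close> by (auto simp: lazy_rw_def)
  qed
qed

lemma walk1: "E a b \<Longrightarrow> walk_len E a b 1"
  unfolding walk_len_def by (rule exI[of _ "\<lambda>i. if i = 0 then a else b"]) auto

lemma walk2: "E a b \<Longrightarrow> E b c \<Longrightarrow> walk_len E a c 2"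
  unfolding walk_len_def
  by (rule exI[of _ "\<lambda>i. if i = 0 then a else if i = 1 then b else c"]) (auto simp: less_2_cases_iff)

lemma walk0: "walk_len E a b 0 \<longleftrightarrow> a = b"
  unfolding walk_len_def by auto

lemma gdist_ge1: "walk_len E a b n \<Longrightarrow> a \<noteq> b \<Longrightarrow> gdist E a b \<ge> 1"
proof -
  assume w: "walk_len E a b n" and ne: "a \<noteq> b"
  have "walk_len E a b (LEAST n. walk_len E a b n)" using w by (rule LeastI)
  then have "(LEAST n. walk_len E a b n) \<noteq> 0" using ne walk0 by metis
  then show ?thesis unfolding gdist_def by simp
qed

lemma gdist_adj: "E a b \<Longrightarrow> a \<noteq> b \<Longrightarrow> gdist E a b = 1"
proof -
  assume e: "E a b" and ne: "a \<noteq> b"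
  have "(LEAST n. walk_len E a b n) = 1"
  proof (rule Least_equality)
    show "walk_len E a b 1" using walk1[of E a b] e by blast
    fix m assume w: "walk_len E a b m"
    show "1 \<le> m"
    proof (rule ccontr)
      assume "\<not> 1 \<le> m" then have "m = 0" by simp
      then show False using w ne walk0[of E a b] by simp
    qed
  qed
  then show ?thesis by (simp add: gdist_def)
qed

lemma gdist_nat: "gdist E a b = real (LEAST n. walk_len E a b n)" by (simp add: gdist_def)



locale gr =
  fixes E :: "'a \<Rightarrow> 'a \<Rightarrow> bool" and x x' :: 'a
  assumes sym: "\<And>u v. E u v \<Longrightarrow> E v u" and irrefl: "\<And>u. \<not> E u u"
    and locfin: "\<And>u. finite (nbrs E u)" and adj: "E x x'"

context gr
begin

definition SS where "SS = {x, x'} \<union> nbrs E x \<union> nbrs E x'"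

definition costS :: "('a \<times> 'a \<Rightarrow> real) \<Rightarrow> real" where
  "costS \<xi> = (\<Sum>p\<in>SS\<times>SS. \<xi> p * gdist E (fst p) (snd p))"

lemma finS: "finite SS" unfolding SS_def using locfin by simp

lemma neq: "x \<noteq> x'" using adj irrefl by metis

lemma dx: "deg E x > 0"
  unfolding deg_def using adj locfin[of x] by (auto simp: nbrs_def card_gt_0_iff)

lemma dx': "deg E x' > 0"
  unfolding deg_def using sym[OF adj] locfin[of x'] by (auto simp: nbrs_def card_gt_0_iff)

lemma supp1: "y \<notin> SS \<Longrightarrow> lazy_rw E t x y = 0"
  by (auto simp: SS_def lazy_rw_def nbrs_def)

lemma supp2: "y \<notin> SS \<Longrightarrow> lazy_rw E t x' y = 0"
  by (auto simp: SS_def lazy_rw_def nbrs_def)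

lemma sum1: "(\<Sum>y\<in>SS. lazy_rw E t x y) = 1"
  by (rule lazy_sum[OF finS]) (use dx irrefl locfin in \<open>auto simp: SS_def\<close>)

lemma sum2: "(\<Sum>y\<in>SS. lazy_rw E t x' y) = 1"
  by (rule lazy_sum[OF finS]) (use dx' irrefl locfin in \<open>auto simp: SS_def\<close>)

lemma gxx': "gdist E x x' = 1" using gdist_adj[of E x x', OF adj neq] .

lemma Cset: "{coupling_cost E \<xi> | \<xi>. is_coupling (lazy_rw E t x) (lazy_rw E t x') \<xi>}
   = {costS \<xi> | \<xi>. fcoup SS (lazy_rw E t x) (lazy_rw E t x') \<xi>}"
proof -
  have "is_coupling (lazy_rw E t x) (lazy_rw E t x') \<xi> \<longleftrightarrow> fcoup SS (lazy_rw E t x) (lazy_rw E t x') \<xi>" for \<xi>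
    by (rule coup_iff[OF finS supp1 supp2])
  moreover have "fcoup SS (lazy_rw E t x) (lazy_rw E t x') \<xi> \<Longrightarrow> coupling_cost E \<xi> = costS \<xi>" for \<xi>
    unfolding costS_def by (rule cost_eq[OF finS])
  ultimately show ?thesis
    apply (intro set_eqI iffI)
     apply (smt (verit) mem_Collect_eq)
    apply (smt (verit) mem_Collect_eq)
    done
qed

lemma W1_eq: "W1 E (lazy_rw E t x) (lazy_rw E t x') = Inf {costS \<xi> | \<xi>. fcoup SS (lazy_rw E t x) (lazy_rw E t x') \<xi>}"
  unfolding W1_def Cset ..

lemma prod_coup:
  assumes "0 \<le> t" "t \<le> 1"
  shows "fcoup SS (lazy_rw E t x) (lazy_rw E t x') (\<lambda>p. lazy_rw E t x (fst p) * lazy_rw E t x' (snd p))"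
  unfolding fcoup_def
proof (intro conjI allI ballI impI)
  fix p show "0 \<le> lazy_rw E t x (fst p) * lazy_rw E t x' (snd p)"
    by (intro mult_nonneg_nonneg lazy_nonneg[OF assms])
next
  fix p :: "'a \<times> 'a" assume "p \<notin> SS \<times> SS"
  then show "lazy_rw E t x (fst p) * lazy_rw E t x' (snd p) = 0"
    using supp1 supp2 by (cases p) auto
next
  fix y assume "y \<in> SS"
  show "(\<Sum>y'\<in>SS. lazy_rw E t x (fst (y, y')) * lazy_rw E t x' (snd (y, y'))) = lazy_rw E t x y"
    using sum2 by (simp add: sum_distrib_left[symmetric])
next
  fix y' assume "y' \<in> SS"
  show "(\<Sum>y\<in>SS. lazy_rw E t x (fst (y, y')) * lazy_rw E t x' (snd (y, y'))) = lazy_rw E t x' y'"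
    using sum1 by (simp add: sum_distrib_right[symmetric])
qed

lemma costS_nonneg: "fcoup SS \<mu> \<mu>' \<xi> \<Longrightarrow> costS \<xi> \<ge> 0"
  unfolding costS_def fcoup_def by (intro sum_nonneg mult_nonneg_nonneg) (auto simp: gdist_def)

end



context gr
begin

lemma round_coup:
  assumes N: "N > 0" and M: "M = real N * real (deg E x) * real (deg E x')"
    and f: "fcoup SS (lazy_rw E (1/real N) x) (lazy_rw E (1/real N) x') \<xi>"
  shows "\<exists>\<xi>'. fcoup SS (lazy_rw E (1/real N) x) (lazy_rw E (1/real N) x') \<xi>'
     \<and> (\<forall>p. \<exists>k::nat. \<xi>' p = real k / M) \<and> costS \<xi>' \<le> costS \<xi>"
proof -
  let ?\<mu> = "lazy_rw E (1/real N) x" and ?\<nu> = "lazy_rw E (1/real N) x'"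
  have Mpos: "M > 0" using M N dx dx' by simp
  have mi: "\<exists>k::nat. M * ?\<mu> y = real k" for y
    using lazy_int[OF N dx, of "deg E x'" y] M by simp
  have ni: "\<exists>k::nat. M * ?\<nu> y = real k" for y
    using lazy_int[OF N dx', of "deg E x" y] M by (simp add: mult_ac)
  have nn: "\<forall>p. \<xi> p \<ge> 0" and z: "\<forall>p. p \<notin> SS\<times>SS \<longrightarrow> \<xi> p = 0"
    and r: "\<forall>y\<in>SS. (\<Sum>y'\<in>SS. \<xi>(y,y')) = ?\<mu> y" and c: "\<forall>y'\<in>SS. (\<Sum>y\<in>SS. \<xi>(y,y')) = ?\<nu> y'"
    using f unfolding fcoup_def by blast+
  define A where "A p = M * \<xi> p" for p
  define w where "w p = gdist E (fst p) (snd p)" for p :: "'a \<times> 'a"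
  have Ann: "\<forall>e. A e \<ge> 0" using nn Mpos by (simp add: A_def)
  have Az: "\<forall>e. e \<notin> SS\<times>SS \<longrightarrow> A e = 0" using z by (simp add: A_def)
  have Ar: "(\<Sum>c\<in>SS. A(r,c)) = M * ?\<mu> r" if "r \<in> SS" for r
    using r that by (simp add: A_def sum_distrib_left[symmetric])
  have Ac: "(\<Sum>r\<in>SS. A(r,c)) = M * ?\<nu> c" if "c \<in> SS" for c
    using c that by (simp add: A_def sum_distrib_left[symmetric])
  have ArI: "\<forall>r\<in>SS. (\<Sum>c\<in>SS. A(r,c)) \<in> \<int>"
  proof
    fix r assume "r \<in> SS"
    obtain k :: nat where "M * ?\<mu> r = real k" using mi by blast
    then show "(\<Sum>c\<in>SS. A(r,c)) \<in> \<int>" using Ar[OF \<open>r \<in> SS\<close>] by simp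
  qed
  have AcI: "\<forall>c\<in>SS. (\<Sum>r\<in>SS. A(r,c)) \<in> \<int>"
  proof
    fix c assume "c \<in> SS"
    obtain k :: nat where "M * ?\<nu> c = real k" using ni by blast
    then show "(\<Sum>r\<in>SS. A(r,c)) \<in> \<int>" using Ac[OF \<open>c \<in> SS\<close>] by simp
  qed
  obtain B where B: "\<forall>e. B e \<ge> 0" "\<forall>e. B e \<in> \<int>" "\<forall>e. e \<notin> SS\<times>SS \<longrightarrow> B e = 0"
     "\<forall>r\<in>SS. (\<Sum>c\<in>SS. B(r,c)) = (\<Sum>c\<in>SS. A(r,c))"
     "\<forall>c\<in>SS. (\<Sum>r\<in>SS. B(r,c)) = (\<Sum>r\<in>SS. A(r,c))"
     "(\<Sum>e\<in>SS\<times>SS. B e * w e) \<le> (\<Sum>e\<in>SS\<times>SS. A e * w e)"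
    using rounding[OF finS Ann Az ArI AcI, of w] by blast
  define \<xi>' where "\<xi>' p = B p / M" for p
  have f': "fcoup SS ?\<mu> ?\<nu> \<xi>'"
    unfolding fcoup_def
  proof (intro conjI allI ballI impI)
    fix p show "0 \<le> \<xi>' p" using B(1)[rule_format, of p] Mpos by (simp add: \<xi>'_def)
  next
    fix p :: "'a \<times> 'a" assume "p \<notin> SS \<times> SS" then show "\<xi>' p = 0" using B(3)[rule_format, of p] by (simp add: \<xi>'_def)
  next
    fix y assume y: "y \<in> SS"
    have "(\<Sum>y'\<in>SS. \<xi>' (y, y')) = (\<Sum>y'\<in>SS. B (y, y')) / M" by (simp add: \<xi>'_def sum_divide_distrib)
    also have "\<dots> = ?\<mu> y" using B(4) y Ar[OF y] Mpos by simp
    finally show "(\<Sum>y'\<in>SS. \<xi>' (y, y')) = ?\<mu> y" .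
  next
    fix y' assume y: "y' \<in> SS"
    have "(\<Sum>y\<in>SS. \<xi>' (y, y')) = (\<Sum>y\<in>SS. B (y, y')) / M" by (simp add: \<xi>'_def sum_divide_distrib)
    also have "\<dots> = ?\<nu> y'" using B(5) y Ac[OF y] Mpos by simp
    finally show "(\<Sum>y\<in>SS. \<xi>' (y, y')) = ?\<nu> y'" .
  qed
  have ent: "\<forall>p. \<exists>k::nat. \<xi>' p = real k / M"
  proof
    fix p obtain k :: nat where "B p = real k" using Ints_nonneg_nat B(1,2) by blast
    then show "\<exists>k::nat. \<xi>' p = real k / M" by (auto simp: \<xi>'_def)
  qed
  have "costS \<xi>' = (\<Sum>e\<in>SS\<times>SS. B e * w e) / M"
    unfolding costS_def w_def \<xi>'_def by (simp add: sum_divide_distrib)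
  also have "\<dots> \<le> (\<Sum>e\<in>SS\<times>SS. A e * w e) / M" using B(6) Mpos by (simp add: divide_right_mono)
  also have "\<dots> = costS \<xi>"
    unfolding costS_def w_def A_def using Mpos by (simp add: sum_divide_distrib sum_distrib_left[symmetric] mult.assoc)
  finally show ?thesis using f' ent by blast
qed

lemma cost_nat:
  assumes "\<forall>p. \<exists>k::nat. \<xi> p = real k / M"
  shows "\<exists>n::nat. costS \<xi> = real n / M"
proof -
  obtain K where K: "\<forall>p. \<xi> p = real (K p) / M" using choice[OF assms] by blast
  define L where "L p = (LEAST n. walk_len E (fst p) (snd p) n)" for p
  have "costS \<xi> = real (\<Sum>p\<in>SS\<times>SS. K p * L p) / M"
    unfolding costS_def gdist_def L_def sum_divide_distrib of_nat_sum
    by (rule sum.cong) (use K in auto)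
  then show ?thesis by blast
qed

end



context gr
begin

lemma main_N:
  assumes N: "N > 0" and M: "M = real N * real (deg E x) * real (deg E x')"
  shows "\<exists>\<xi> (n::nat). is_coupling (lazy_rw E (1/real N) x) (lazy_rw E (1/real N) x') \<xi>
     \<and> coupling_cost E \<xi> = W1 E (lazy_rw E (1/real N) x) (lazy_rw E (1/real N) x')
     \<and> (\<forall>p. \<exists>k::nat. \<xi> p = real k / M)
     \<and> W1 E (lazy_rw E (1/real N) x) (lazy_rw E (1/real N) x') = real n / M"
proof -
  let ?\<mu> = "lazy_rw E (1/real N) x" and ?\<nu> = "lazy_rw E (1/real N) x'"
  have Mpos: "M > 0" using M N dx dx' by simp
  have t01: "0 \<le> 1/real N" "1/real N \<le> 1" using N by auto
  define P where "P \<xi> \<longleftrightarrow> fcoup SS ?\<mu> ?\<nu> \<xi> \<and> (\<forall>p. \<exists>k::nat. \<xi> p = real k / M)" for \<xi>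
  define Ns where "Ns = {n::nat. \<exists>\<xi>. P \<xi> \<and> costS \<xi> = real n / M}"
  have rc: "\<exists>\<xi>'. P \<xi>' \<and> costS \<xi>' \<le> costS \<xi>" if "fcoup SS ?\<mu> ?\<nu> \<xi>" for \<xi>
    using round_coup[OF N M that] unfolding P_def by blast
  have inNs: "\<exists>n\<in>Ns. real n / M \<le> costS \<xi>" if f: "fcoup SS ?\<mu> ?\<nu> \<xi>" for \<xi>
  proof -
    obtain \<xi>' where \<xi>': "P \<xi>'" "costS \<xi>' \<le> costS \<xi>" using rc[OF f] by blast
    obtain n :: nat where n: "costS \<xi>' = real n / M" using cost_nat \<xi>'(1) unfolding P_def by blast
    then have "n \<in> Ns" using \<xi>'(1) unfolding Ns_def by blast
    then show ?thesis using \<xi>'(2) n by auto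
  qed
  obtain n1 where "n1 \<in> Ns" using inNs[OF prod_coup[OF t01]] by blast
  define n0 where "n0 = (LEAST n. n \<in> Ns)"
  have "n0 \<in> Ns" unfolding n0_def using \<open>n1 \<in> Ns\<close> by (rule LeastI)
  then obtain \<xi>0 where \<xi>0: "P \<xi>0" "costS \<xi>0 = real n0 / M" unfolding Ns_def by blast
  have low: "costS \<xi>0 \<le> costS \<xi>" if f: "fcoup SS ?\<mu> ?\<nu> \<xi>" for \<xi>
  proof -
    obtain n where n: "n \<in> Ns" "real n / M \<le> costS \<xi>" using inNs[OF f] by blast
    have "n0 \<le> n" unfolding n0_def using n(1) by (rule Least_le)
    then have "real n0 / M \<le> real n / M" using Mpos by (simp add: divide_right_mono)
    then show ?thesis using n(2) \<xi>0(2) by linarith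
  qed
  have W: "W1 E ?\<mu> ?\<nu> = costS \<xi>0"
    unfolding W1_eq
  proof (rule cInf_eq_minimum)
    show "costS \<xi>0 \<in> {costS \<xi> |\<xi>. fcoup SS ?\<mu> ?\<nu> \<xi>}" using \<xi>0(1) unfolding P_def by blast
  next
    fix c assume "c \<in> {costS \<xi> |\<xi>. fcoup SS ?\<mu> ?\<nu> \<xi>}"
    then show "costS \<xi>0 \<le> c" using low by blast
  qed
  have f0: "fcoup SS ?\<mu> ?\<nu> \<xi>0" using \<xi>0(1) unfolding P_def by blast
  have ic: "is_coupling ?\<mu> ?\<nu> \<xi>0" using coup_iff[OF finS, of ?\<mu> ?\<nu> \<xi>0] supp1 supp2 f0 by blast
  have cc: "coupling_cost E \<xi>0 = costS \<xi>0" unfolding costS_def by (rule cost_eq[OF finS f0])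
  show ?thesis
    using ic cc W \<xi>0 unfolding P_def by metis
qed

end



context gr
begin

lemma Cne: "0 \<le> t \<Longrightarrow> t \<le> 1 \<Longrightarrow> {costS \<xi> |\<xi>. fcoup SS (lazy_rw E t x) (lazy_rw E t x') \<xi>} \<noteq> {}"
  using prod_coup by blast

lemma Cbdd: "bdd_below {costS \<xi> |\<xi>. fcoup SS (lazy_rw E t x) (lazy_rw E t x') \<xi>}"
  unfolding bdd_below_def using costS_nonneg by blast

lemma d_ge1: "y \<in> SS \<Longrightarrow> y \<noteq> x \<Longrightarrow> gdist E x y \<ge> 1"
proof -
  assume y: "y \<in> SS" "y \<noteq> x"
  have "\<exists>n. walk_len E x y n"
  proof -
    consider "y = x'" | "E x y" | "E x' y" using y unfolding SS_def nbrs_def by auto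
    then show ?thesis
    proof cases
      case 1 then show ?thesis using walk1[of E x x'] adj by blast
    next
      case 2 then show ?thesis using walk1[of E x y] by blast
    next
      case 3 then show ?thesis using walk2[of E x x' y] adj by blast
    qed
  qed
  then show ?thesis using gdist_ge1[of E x y] y by metis
qed

lemma cost_lower:
  assumes t: "0 \<le> t" "t \<le> 1" and f: "fcoup SS (lazy_rw E t x) (lazy_rw E t x') \<xi>"
  shows "costS \<xi> \<ge> 1 - t - t / real (deg E x')"
proof -
  have nn: "\<forall>p. \<xi> p \<ge> 0" and z: "\<forall>p. p \<notin> SS\<times>SS \<longrightarrow> \<xi> p = 0"
    and r: "\<forall>y\<in>SS. (\<Sum>y'\<in>SS. \<xi>(y,y')) = lazy_rw E t x y"
    and c: "\<forall>y'\<in>SS. (\<Sum>y\<in>SS. \<xi>(y,y')) = lazy_rw E t x' y'"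
    using f unfolding fcoup_def by blast+
  have xS: "x \<in> SS" by (simp add: SS_def)
  let ?d = "\<lambda>p. gdist E (fst p) (snd p)"
  have dnn: "?d p \<ge> 0" for p by (simp add: gdist_def)
  have "costS \<xi> \<ge> (\<Sum>p\<in>(\<lambda>y'. (x,y')) ` (SS - {x}). \<xi> p * ?d p)"
    unfolding costS_def
    by (rule sum_mono2) (use finS xS nn dnn in \<open>auto intro!: mult_nonneg_nonneg\<close>)
  also have "(\<Sum>p\<in>(\<lambda>y'. (x,y')) ` (SS - {x}). \<xi> p * ?d p) = (\<Sum>y'\<in>SS - {x}. \<xi> (x,y') * gdist E x y')"
    by (subst sum.reindex) (auto simp: inj_on_def)
  also have "\<dots> \<ge> (\<Sum>y'\<in>SS - {x}. \<xi> (x,y'))"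
  proof (rule sum_mono)
    fix y' assume y': "y' \<in> SS - {x}"
    have "1 \<le> gdist E x y'" using d_ge1 y' by blast
    moreover have "0 \<le> \<xi> (x,y')" using nn by blast
    ultimately show "\<xi> (x,y') \<le> \<xi> (x,y') * gdist E x y'"
      using mult_left_mono[of 1 "gdist E x y'" "\<xi> (x,y')"] by simp
  qed
  also have "(\<Sum>y'\<in>SS - {x}. \<xi> (x,y')) = lazy_rw E t x x - \<xi> (x,x)"
    using sum.remove[OF finS xS, of "\<lambda>y'. \<xi> (x,y')"] r xS by simp
  finally have c1: "costS \<xi> \<ge> lazy_rw E t x x - \<xi> (x,x)" .
  have "\<xi> (x,x) \<le> lazy_rw E t x' x"
  proof -
    have "\<xi> (x,x) \<le> (\<Sum>y\<in>SS. \<xi>(y,x))"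
      by (rule member_le_sum) (use finS xS nn in auto)
    then show ?thesis using c xS by simp
  qed
  then show ?thesis using c1 neq sym[OF adj] by (simp add: lazy_rw_def)
qed

lemma W_lower:
  assumes t: "0 \<le> t" "t \<le> 1"
  shows "W1 E (lazy_rw E t x) (lazy_rw E t x') \<ge> 1 - t - t / real (deg E x')"
  unfolding W1_eq by (rule cInf_greatest[OF Cne[OF t]]) (use cost_lower[OF t] in blast)

end



context gr
begin

lemma W_interp:
  assumes st: "0 < s" "s \<le> t" "t \<le> 1"
  shows "W1 E (lazy_rw E s x) (lazy_rw E s x') \<le> (s/t) * W1 E (lazy_rw E t x) (lazy_rw E t x') + (1 - s/t)"
proof -
  define l where "l = s / t"
  have tpos: "t > 0" using st by simp
  have l01: "0 < l" "l \<le> 1" using st by (auto simp: l_def)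
  have xS: "x \<in> SS" and x'S: "x' \<in> SS" by (auto simp: SS_def)
  let ?Ws = "W1 E (lazy_rw E s x) (lazy_rw E s x')"
  have key: "?Ws \<le> l * costS \<xi> + (1 - l)" if f: "fcoup SS (lazy_rw E t x) (lazy_rw E t x') \<xi>" for \<xi>
  proof -
    have nn: "\<forall>p. \<xi> p \<ge> 0" and z: "\<forall>p. p \<notin> SS\<times>SS \<longrightarrow> \<xi> p = 0"
      and r: "\<forall>y\<in>SS. (\<Sum>y'\<in>SS. \<xi>(y,y')) = lazy_rw E t x y"
      and c: "\<forall>y'\<in>SS. (\<Sum>y\<in>SS. \<xi>(y,y')) = lazy_rw E t x' y'"
      using f unfolding fcoup_def by blast+
    define \<eta> where "\<eta> p = l * \<xi> p + (1 - l) * (if p = (x,x') then 1 else 0)" for p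
    have fs: "fcoup SS (lazy_rw E s x) (lazy_rw E s x') \<eta>"
      unfolding fcoup_def
    proof (intro conjI allI ballI impI)
      fix p show "0 \<le> \<eta> p" using nn[rule_format, of p] l01 by (simp add: \<eta>_def)
    next
      fix p :: "'a \<times> 'a" assume "p \<notin> SS \<times> SS" then show "\<eta> p = 0"
        using z[rule_format, of p] xS x'S by (auto simp: \<eta>_def)
    next
      fix y assume y: "y \<in> SS"
      have "(\<Sum>y'\<in>SS. \<eta> (y, y')) = l * (\<Sum>y'\<in>SS. \<xi> (y,y')) + (1 - l) * (\<Sum>y'\<in>SS. if (y,y') = (x,x') then 1 else 0)"
        by (simp add: \<eta>_def sum.distrib sum_distrib_left)
      also have "(\<Sum>y'\<in>SS. if (y,y') = (x,x') then 1 else (0::real)) = (if y = x then 1 else 0)"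
        using finS x'S by simp
      finally show "(\<Sum>y'\<in>SS. \<eta> (y, y')) = lazy_rw E s x y"
        using r y lazy_affine[OF tpos, of E s x y] by (simp add: l_def)
    next
      fix y' assume y': "y' \<in> SS"
      have "(\<Sum>y\<in>SS. \<eta> (y, y')) = l * (\<Sum>y\<in>SS. \<xi> (y,y')) + (1 - l) * (\<Sum>y\<in>SS. if (y,y') = (x,x') then 1 else 0)"
        by (simp add: \<eta>_def sum.distrib sum_distrib_left)
      also have "(\<Sum>y\<in>SS. if (y,y') = (x,x') then 1 else (0::real)) = (if y' = x' then 1 else 0)"
        using finS xS by simp
      finally show "(\<Sum>y\<in>SS. \<eta> (y, y')) = lazy_rw E s x' y'"
        using c y' lazy_affine[OF tpos, of E s x' y'] by (simp add: l_def)
    qed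
    have "costS \<eta> = l * costS \<xi> + (1 - l) * (\<Sum>p\<in>SS\<times>SS. (if p = (x,x') then 1 else 0) * gdist E (fst p) (snd p))"
    proof -
      have "costS \<eta> = (\<Sum>p\<in>SS\<times>SS. l * (\<xi> p * gdist E (fst p) (snd p)) + (1 - l) * ((if p = (x,x') then 1 else 0) * gdist E (fst p) (snd p)))"
        unfolding costS_def \<eta>_def by (rule sum.cong) (simp_all add: algebra_simps)
      also have "\<dots> = l * costS \<xi> + (1 - l) * (\<Sum>p\<in>SS\<times>SS. (if p = (x,x') then 1 else 0) * gdist E (fst p) (snd p))"
        unfolding costS_def by (simp only: sum.distrib sum_distrib_left)
      finally show ?thesis .
    qed
    also have "(\<Sum>p\<in>SS\<times>SS. (if p = (x,x') then 1 else 0) * gdist E (fst p) (snd p)) = gdist E x x'"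
    proof -
      have "(\<Sum>p\<in>SS\<times>SS. (if p = (x,x') then 1 else 0) * gdist E (fst p) (snd p))
          = (\<Sum>p\<in>SS\<times>SS. if p = (x,x') then gdist E (fst p) (snd p) else 0)"
        by (rule sum.cong) auto
      also have "\<dots> = gdist E x x'" using finS xS x'S by (subst sum.delta) auto
      finally show ?thesis .
    qed
    finally have "costS \<eta> = l * costS \<xi> + (1 - l)" using gxx' by simp
    moreover have "?Ws \<le> costS \<eta>"
      unfolding W1_eq by (rule cInf_lower) (use fs Cbdd[of s] in blast)+
    ultimately show ?thesis by simp
  qed
  have "(?Ws - (1 - l)) / l \<le> W1 E (lazy_rw E t x) (lazy_rw E t x')"
    unfolding W1_eq[of t]
  proof (rule cInf_greatest)
    show "{costS \<xi> |\<xi>. fcoup SS (lazy_rw E t x) (lazy_rw E t x') \<xi>} \<noteq> {}"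
      using Cne st by simp
  next
    fix c assume "c \<in> {costS \<xi> |\<xi>. fcoup SS (lazy_rw E t x) (lazy_rw E t x') \<xi>}"
    then obtain \<xi> where "c = costS \<xi>" "fcoup SS (lazy_rw E t x) (lazy_rw E t x') \<xi>" by blast
    then have "?Ws \<le> l * c + (1 - l)" using key by blast
    then show "(?Ws - (1 - l)) / l \<le> c" using l01 by (simp add: divide_le_eq mult.commute)
  qed
  then have "?Ws - (1 - l) \<le> l * W1 E (lazy_rw E t x) (lazy_rw E t x')"
    using l01 by (simp add: divide_le_eq mult.commute)
  then show ?thesis by (simp add: l_def)
qed

end



context gr
begin

lemma kappa_eq: "kappa E t x x' = 1 - W1 E (lazy_rw E t x) (lazy_rw E t x')"
  unfolding kappa_def gxx' by simp

lemma g_mono: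
  assumes st: "0 < s" "s \<le> t" "t \<le> 1"
  shows "kappa E t x x' / t \<le> kappa E s x x' / s"
proof -
  let ?Ws = "W1 E (lazy_rw E s x) (lazy_rw E s x')" and ?Wt = "W1 E (lazy_rw E t x) (lazy_rw E t x')"
  have tpos: "t > 0" using st by simp
  have i: "?Ws \<le> (s/t) * ?Wt + (1 - s/t)" by (rule W_interp[OF st])
  then have h: "(s/t) * (1 - ?Wt) \<le> 1 - ?Ws" by (simp add: algebra_simps)
  have "((s/t) * (1 - ?Wt)) / s \<le> (1 - ?Ws) / s" by (rule divide_right_mono[OF h]) (use st in simp)
  moreover have "((s/t) * (1 - ?Wt)) / s = (1 - ?Wt) / t" using st tpos by (simp add: field_simps)
  ultimately show ?thesis by (simp add: kappa_eq)
qed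

lemma g_bound:
  assumes t: "0 < t" "t \<le> 1"
  shows "kappa E t x x' / t \<le> 1 + 1 / real (deg E x')"
proof -
  let ?Wt = "W1 E (lazy_rw E t x) (lazy_rw E t x')"
  have "1 - ?Wt \<le> t * (1 + 1 / real (deg E x'))" using W_lower[of t] t by (simp add: algebra_simps)
  then have "(1 - ?Wt) / t \<le> 1 + 1 / real (deg E x')" using t by (simp add: divide_le_eq mult.commute)
  then show ?thesis by (simp add: kappa_eq)
qed

lemma g_int:
  assumes N: "N > 0"
  shows "\<exists>k::int. kappa E (1/real N) x x' / (1/real N) = real_of_int k / (real (deg E x) * real (deg E x'))"
proof -
  define M where "M = real N * real (deg E x) * real (deg E x')"
  obtain \<xi> and n :: nat where n: "W1 E (lazy_rw E (1/real N) x) (lazy_rw E (1/real N) x') = real n / M"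
    using main_N[OF N M_def] by blast
  have c: "real (deg E x) * real (deg E x') > 0" using dx dx' by simp
  have "kappa E (1/real N) x x' / (1/real N) = real N * (1 - real n / M)" using n by (simp add: kappa_eq)
  also have "\<dots> = real_of_int (int N * int (deg E x) * int (deg E x') - int n) / (real (deg E x) * real (deg E x'))"
  proof -
    have a: "real (deg E x) > 0" "real (deg E x') > 0" using dx dx' by auto
    show ?thesis using N a unfolding M_def by (simp add: field_simps)
  qed
  finally show ?thesis by blast
qed

lemma kappa1_int:
  "\<exists>k::int. kappa E 1 x x' = real_of_int k / (real (deg E x) * real (deg E x'))"
  using g_int[of 1] by simp

end



context gr
begin

lemma ric_int:
  "\<exists>k::int. ric E x x' = ereal (real_of_int k / (real (deg E x) * real (deg E x')))"
proof -
  define c where "c = real (deg E x) * real (deg E x')"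
  have cpos: "c > 0" using dx dx' by (simp add: c_def)
  define g where "g t = kappa E t x x' / t" for t
  have "\<forall>N. \<exists>k::int. N > 0 \<longrightarrow> g (1/real N) = real_of_int k / c"
    using g_int unfolding g_def c_def by blast
  then obtain ai :: "nat \<Rightarrow> int" where ai: "\<And>N. N > 0 \<Longrightarrow> g (1/real N) = real_of_int (ai N) / c"
    using choice by metis
  have gm: "g t \<le> g s" if "0 < s" "s \<le> t" "t \<le> 1" for s t
    unfolding g_def by (rule g_mono[OF that])
  have aimono: "ai N \<le> ai N'" if "0 < N" "N \<le> N'" for N N'
  proof -
    have "g (1/real N) \<le> g (1/real N')"
      by (rule gm) (use that in \<open>auto simp: frac_le\<close>)
    then have "real_of_int (ai N) / c \<le> real_of_int (ai N') / c" using ai that by simp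
    then show ?thesis using cpos by (simp add: divide_le_cancel)
  qed
  define Kb where "Kb = floor ((1 + 1 / real (deg E x')) * c)"
  have aib: "ai N \<le> Kb" if "0 < N" for N
  proof -
    have "g (1/real N) \<le> 1 + 1 / real (deg E x')"
      unfolding g_def by (rule g_bound) (use that in auto)
    then have "real_of_int (ai N) / c \<le> 1 + 1 / real (deg E x')" using ai that by simp
    then have "real_of_int (ai N) \<le> (1 + 1 / real (deg E x')) * c" using cpos by (simp add: divide_le_eq)
    then show ?thesis unfolding Kb_def by (simp add: le_floor_iff)
  qed
  define As where "As = ai ` {N. N > 0}"
  have finAs: "finite As"
  proof (rule finite_subset)
    show "As \<subseteq> {ai 1..Kb}" unfolding As_def using aimono aib by (auto simp: Suc_le_eq)
  qed simp
  have neAs: "As \<noteq> {}" unfolding As_def by auto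
  define Km where "Km = Max As"
  have "Km \<in> As" unfolding Km_def using finAs neAs by (rule Max_in)
  then obtain N0 where N0: "N0 > 0" "ai N0 = Km" unfolding As_def by auto
  have aiK: "ai N = Km" if "N0 \<le> N" for N
  proof -
    have "ai N \<in> As" using that N0 unfolding As_def by auto
    then have "ai N \<le> Km" unfolding Km_def using finAs by simp
    moreover have "ai N0 \<le> ai N" using aimono N0 that by blast
    ultimately show ?thesis using N0 by simp
  qed
  have const: "g t = real_of_int Km / c" if t: "t \<in> {0<..<1/real N0}" for t
  proof -
    have t0: "0 < t" "t < 1/real N0" using t by auto
    have N01: "1/real N0 \<le> 1" using N0 by simp
    have "g (1/real N0) \<le> g t" by (rule gm) (use t0 N01 in auto)
    then have ge: "real_of_int Km / c \<le> g t" using ai N0 by simp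
    define n where "n = nat (ceiling (1/t))"
    have "real N0 < 1/t" using t0 N0 by (simp add: field_simps)
    then have nN0: "N0 \<le> n" unfolding n_def by linarith
    have n1: "1/t \<le> real n" unfolding n_def by linarith
    have npos: "n > 0" using nN0 N0 by simp
    have "1/real n \<le> t" using n1 t0 npos by (simp add: field_simps)
    then have "g t \<le> g (1/real n)" by (intro gm) (use npos t0 N01 in auto)
    then have "g t \<le> real_of_int Km / c" using ai[OF npos] aiK[OF nN0] by simp
    then show ?thesis using ge by simp
  qed
  have ev: "eventually (\<lambda>t. ereal (g t) = ereal (real_of_int Km / c)) (at_right 0)"
  proof -
    have "eventually (\<lambda>t. t \<in> {0<..<1/real N0}) (at_right (0::real))"
      by (rule eventually_at_right_real) (use N0 in simp)
    then show ?thesis by eventually_elim (use const in simp)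
  qed
  have "((\<lambda>t. ereal (g t)) \<longlongrightarrow> ereal (real_of_int Km / c)) (at_right 0)"
    using tendsto_eventually[OF ev] .
  then have "Liminf (at_right 0) (\<lambda>t. ereal (g t)) = ereal (real_of_int Km / c)"
    by (intro lim_imp_Liminf) auto
  then show ?thesis unfolding ric_def g_def c_def by blast
qed

end


theorem theorem1:
  fixes E :: "'a \<Rightarrow> 'a \<Rightarrow> bool" and x x' :: 'a and N :: nat and t :: real
  assumes sym: "\<And>u v. E u v \<Longrightarrow> E v u"
    and irrefl: "\<And>u. \<not> E u u"
    and locfin: "\<And>u. finite (nbrs E u)"
    and adj: "E x x'"
    and N: "N > 0"
    and t: "t = 1 / real N"
  shows "(\<exists>\<xi>. optimal_coupling E (lazy_rw E t x) (lazy_rw E t x') \<xi> \<and>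
            (\<forall>p. \<exists>k::nat. \<xi> p = real k / (real N * real (deg E x) * real (deg E x'))))
       \<and> (\<exists>k::int. kappa E 1 x x' = real_of_int k / (real (deg E x) * real (deg E x')))
       \<and> (\<exists>k::int. ric E x x' = ereal (real_of_int k / (real (deg E x) * real (deg E x'))))"
proof -
  interpret gr E x x'
    by (rule gr.intro) (fact sym irrefl locfin adj)+
  obtain \<xi> and n :: nat where
    m: "is_coupling (lazy_rw E (1/real N) x) (lazy_rw E (1/real N) x') \<xi>"
       "coupling_cost E \<xi> = W1 E (lazy_rw E (1/real N) x) (lazy_rw E (1/real N) x')"
       "\<forall>p. \<exists>k::nat. \<xi> p = real k / (real N * real (deg E x) * real (deg E x'))"
    using main_N[OF N refl] by blast
  have p1: "\<exists>\<xi>. optimal_coupling E (lazy_rw E t x) (lazy_rw E t x') \<xi> \<and>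
            (\<forall>p. \<exists>k::nat. \<xi> p = real k / (real N * real (deg E x) * real (deg E x')))"
    using m unfolding optimal_coupling_def t by blast
  show ?thesis using p1 kappa1_int ric_int by blast
qed

end
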